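(* The simply connected Lie group $N_6=\mathrm{Heis}_3(\mathbb{R}[\epsilon])$ with Lie algebra $\mathcal{N}_6$ does not satisfy the partial automatic continuity.
   Context: $\mathbb{R}[\epsilon]=\mathbb{R}[X]/(X^2)$ is the ring of dual numbers. $\mathcal{N}_6=\mathrm{heis}_3(\mathbb{R}[\epsilon])=\{aX+bY+cZ: a,b,c\in\mathbb{R}[\epsilon]\}$ with $[X,Y]=Z$; as a real Lie algebra it has basis $X_1=X$, $X_2=Y$, $X_3=\epsilon Y$, $X_4=-\epsilon X$, $Z_1=Z$, $Z_2=\epsilon Z$ with nonzero brackets $[X_1,X_2]=Z_1$, $[X_1,X_3]=Z_2$, $[X_2,X_4]=Z_2$. For a simply connected nilpotent Lie group $N$ with Lie algebra $\mathcal{N}$: a central automorphism is an abstract group automorphism $F$ with $x^{-1}F(x)\in Z(N)$ for all $x$; a Lie group automorphism is a continuous automorphism. Field automorphisms: if $\mathcal{N}=\mathcal{N}_1\oplus\cdots\oplus\mathcal{N}_k$ (ideals), for each $\mathcal{N}_i$ that is the realification of a complex Lie algebra choose a $\mathbb{C}$-basis and a field automorphism $\varphi$ of $\mathbb{C}$ fixing the structure constants and let $\sigma_i$ apply $\varphi$ to coordinates, otherwise $\sigma_i=\mathrm{id}$; $\exp\circ(\sigma_1\times\cdots\times\sigma_k)\circ\exp^{-1}$ is a field automorphism of $N$. $N$ satisfies the partial automatic continuity if every abstract group automorphism has the form $\mu\circ\overline{F}\circ\Phi$ with $\mu$ central, $\overline{F}$ a Lie group automorphism, $\Phi$ a field automorphism.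 *)

theory Defs
  imports "HOL-Analysis.Analysis"
begin

text \<open>Dual numbers R[eps] = R[X]/(X^2): the pair (a0,a1) stands for a0 + a1 eps.\<close>
type_synonym dual = "real \<times> real"

definition dmul :: "dual \<Rightarrow> dual \<Rightarrow> dual" where
  "dmul a b = (fst a * fst b, fst a * snd b + snd a * fst b)"

text \<open>In the Lie algebra (a,b,c) stands for aX + bY + cZ (a real 6-dimensional vector space,
  with the product vector space structure). In the group, (a,b,c) stands for the unipotent
  upper triangular matrix [[1,a,c],[0,1,b],[0,0,1]] over R[eps]; the topology is the product
  (Euclidean) topology on R^6. This is the simply connected Lie group with Lie algebra N_6.\<close>
type_synonym n6 = "dual \<times> dual \<times> dual"

definition n6_bracket :: "n6 \<Rightarrow> n6 \<Rightarrow> n6" where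
  "n6_bracket u v = (case u of (a, b, c) \<Rightarrow> case v of (a', b', c') \<Rightarrow>
       (0, 0, dmul a b' - dmul a' b))"

definition n6_mult :: "n6 \<Rightarrow> n6 \<Rightarrow> n6" where
  "n6_mult u v = (case u of (a, b, c) \<Rightarrow> case v of (a', b', c') \<Rightarrow>
       (a + a', b + b', c + c' + dmul a b'))"

definition n6_inv :: "n6 \<Rightarrow> n6" where
  "n6_inv u = (case u of (a, b, c) \<Rightarrow> (- a, - b, dmul a b - c))"

definition n6_center :: "n6 set" where
  "n6_center = {z. \<forall>x. n6_mult x z = n6_mult z x}"

text \<open>Exponential map of N_6 and its inverse: exp(M) = I + M + M^2/2.\<close>
definition n6_exp :: "n6 \<Rightarrow> n6" where
  "n6_exp u = (case u of (a, b, c) \<Rightarrow> (a, b, c + (1/2) *\<^sub>R dmul a b))"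

definition n6_log :: "n6 \<Rightarrow> n6" where
  "n6_log u = (case u of (a, b, c) \<Rightarrow> (a, b, c - (1/2) *\<^sub>R dmul a b))"

definition n6_abstract_aut :: "(n6 \<Rightarrow> n6) \<Rightarrow> bool" where
  "n6_abstract_aut F \<longleftrightarrow> bij F \<and> (\<forall>x y. F (n6_mult x y) = n6_mult (F x) (F y))"

definition n6_central_aut :: "(n6 \<Rightarrow> n6) \<Rightarrow> bool" where
  "n6_central_aut F \<longleftrightarrow> n6_abstract_aut F \<and> (\<forall>x. n6_mult (n6_inv x) (F x) \<in> n6_center)"

definition n6_lie_aut :: "(n6 \<Rightarrow> n6) \<Rightarrow> bool" where
  "n6_lie_aut F \<longleftrightarrow> n6_abstract_aut F \<and> continuous_on UNIV F"

definition n6_ideal :: "n6 set \<Rightarrow> bool" where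
  "n6_ideal S \<longleftrightarrow> subspace S \<and> (\<forall>x\<in>S. \<forall>y. n6_bracket x y \<in> S)"

definition cmult :: "(n6 \<Rightarrow> n6) \<Rightarrow> complex \<Rightarrow> n6 \<Rightarrow> n6" where
  "cmult J z v = Re z *\<^sub>R v + Im z *\<^sub>R J v"

definition field_aut_C :: "(complex \<Rightarrow> complex) \<Rightarrow> bool" where
  "field_aut_C \<phi> \<longleftrightarrow> bij \<phi> \<and> (\<forall>x y. \<phi> (x + y) = \<phi> x + \<phi> y) \<and> (\<forall>x y. \<phi> (x * y) = \<phi> x * \<phi> y)"

text \<open>sigma acts on the ideal S (viewed as the realification of a complex Lie algebra via the
  complex structure J) by applying a field automorphism phi of C, fixing the structure
  constants, to the coordinates w.r.t. a C-basis es.\<close>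
definition complex_coord_map :: "n6 set \<Rightarrow> (n6 \<Rightarrow> n6) \<Rightarrow> bool" where
  "complex_coord_map S \<sigma> \<longleftrightarrow>
    (\<exists>J es \<phi> c.
       linear J \<and> J ` S \<subseteq> S \<and> (\<forall>x\<in>S. J (J x) = - x) \<and>
       (\<forall>x\<in>S. \<forall>y\<in>S. n6_bracket (J x) y = J (n6_bracket x y)) \<and>
       set es \<subseteq> S \<and>
       (\<forall>v\<in>S. \<exists>!zs. length zs = length es \<and>
                 v = (\<Sum>j<length es. cmult J (zs ! j) (es ! j))) \<and>
       (\<forall>j<length es. \<forall>k<length es.
           n6_bracket (es ! j) (es ! k) = (\<Sum>l<length es. cmult J (c j k l) (es ! l))) \<and>
       field_aut_C \<phi> \<and>
       (\<forall>j<length es. \<forall>k<length es. \<forall>l<length es. \<phi> (c j k l) = c j k l) \<and>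
       (\<forall>zs. length zs = length es \<longrightarrow>
          \<sigma> (\<Sum>j<length es. cmult J (zs ! j) (es ! j)) =
            (\<Sum>j<length es. cmult J (\<phi> (zs ! j)) (es ! j))))"

text \<open>Maps sigma = sigma_1 x ... x sigma_k for a decomposition of N_6 into ideals, where each
  sigma_i is the identity or (if N_i is the realification of a complex Lie algebra) given by a
  field automorphism of C as above. (Choosing phi = id recovers sigma_i = id.)\<close>
definition n6_field_sigma :: "(n6 \<Rightarrow> n6) \<Rightarrow> bool" where
  "n6_field_sigma \<sigma> \<longleftrightarrow>
    (\<exists>Ns :: n6 set list.
       (\<forall>i<length Ns. n6_ideal (Ns ! i)) \<and>
       (\<forall>v. \<exists>!vs. length vs = length Ns \<and> (\<forall>i<length Ns. vs ! i \<in> Ns ! i) \<and> v = sum_list vs) \<and>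
       (\<forall>vs. length vs = length Ns \<and> (\<forall>i<length Ns. vs ! i \<in> Ns ! i) \<longrightarrow>
             \<sigma> (sum_list vs) = sum_list (map \<sigma> vs)) \<and>
       (\<forall>i<length Ns. (\<forall>v\<in>Ns ! i. \<sigma> v = v) \<or> complex_coord_map (Ns ! i) \<sigma>))"

definition n6_field_aut :: "(n6 \<Rightarrow> n6) \<Rightarrow> bool" where
  "n6_field_aut \<Phi> \<longleftrightarrow> (\<exists>\<sigma>. n6_field_sigma \<sigma> \<and> \<Phi> = n6_exp \<circ> \<sigma> \<circ> n6_log)"

definition n6_partial_automatic_continuity :: bool where
  "n6_partial_automatic_continuity \<longleftrightarrow>
    (\<forall>F. n6_abstract_aut F \<longrightarrow>
       (\<exists>\<mu> Fb \<Phi>. n6_central_aut \<mu> \<and> n6_lie_aut Fb \<and> n6_field_aut \<Phi> \<and> F = \<mu> \<circ> Fb \<circ> \<Phi>))"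

end

theory Submission
  imports Defs "HOL-Computational_Algebra.Polynomial"
begin


definition subfield :: "real set \<Rightarrow> bool" where
 "subfield K \<longleftrightarrow> 0 \<in> K \<and> 1 \<in> K \<and> (\<forall>a\<in>K. \<forall>b\<in>K. a + b \<in> K \<and> a * b \<in> K) \<and> (\<forall>a\<in>K. - a \<in> K \<and> inverse a \<in> K)"
definition isder :: "real set \<Rightarrow> (real \<Rightarrow> real) \<Rightarrow> bool" where
 "isder K d \<longleftrightarrow> (\<forall>a\<in>K. \<forall>b\<in>K. d (a + b) = d a + d b \<and> d (a * b) = a * d b + d a * b)"
definition Kpoly :: "real set \<Rightarrow> real poly \<Rightarrow> bool" where
 "Kpoly K p \<longleftrightarrow> (\<forall>i. coeff p i \<in> K)"
definition Dpx :: "(real\<Rightarrow>real) \<Rightarrow> real \<Rightarrow> real \<Rightarrow> real poly \<Rightarrow> real" where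
 "Dpx d x \<delta> p = poly (map_poly d p) x + poly (pderiv p) x * \<delta>"

lemma sf0: "subfield K \<Longrightarrow> 0 \<in> K" and sf1: "subfield K \<Longrightarrow> 1 \<in> K"
  and sfadd: "subfield K \<Longrightarrow> a \<in> K \<Longrightarrow> b \<in> K \<Longrightarrow> a + b \<in> K"
  and sfmult: "subfield K \<Longrightarrow> a \<in> K \<Longrightarrow> b \<in> K \<Longrightarrow> a * b \<in> K"
  and sfneg: "subfield K \<Longrightarrow> a \<in> K \<Longrightarrow> - a \<in> K"
  and sfinv: "subfield K \<Longrightarrow> a \<in> K \<Longrightarrow> inverse a \<in> K"
  by (auto simp: subfield_def)

lemma sfdiff: "subfield K \<Longrightarrow> a \<in> K \<Longrightarrow> b \<in> K \<Longrightarrow> a - b \<in> K"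
  using sfadd sfneg by (metis diff_conv_add_uminus)
lemma sfdiv: "subfield K \<Longrightarrow> a \<in> K \<Longrightarrow> b \<in> K \<Longrightarrow> a / b \<in> K"
  using sfmult sfinv by (metis divide_inverse)
lemma sfnat: "subfield K \<Longrightarrow> of_nat n \<in> K"
  by (induction n) (auto intro: sfadd sf0 sf1)

lemma sfsum: assumes "subfield K" "finite A" "\<forall>i\<in>A. f i \<in> K" shows "sum f A \<in> K"
  using assms(2,3) by (induction A rule: finite_induct) (auto intro: sfadd[OF assms(1)] sf0[OF assms(1)])

lemma der_add: "isder K d \<Longrightarrow> a \<in> K \<Longrightarrow> b \<in> K \<Longrightarrow> d (a + b) = d a + d b"
  and der_mult: "isder K d \<Longrightarrow> a \<in> K \<Longrightarrow> b \<in> K \<Longrightarrow> d (a * b) = a * d b + d a * b"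
  by (auto simp: isder_def)

lemma der0: "isder K d \<Longrightarrow> subfield K \<Longrightarrow> d 0 = 0"
  using der_add[of K d 0 0] sf0 by auto
lemma der1: "isder K d \<Longrightarrow> subfield K \<Longrightarrow> d 1 = 0"
  using der_mult[of K d 1 1] sf1 by auto
lemma derneg: "isder K d \<Longrightarrow> subfield K \<Longrightarrow> a \<in> K \<Longrightarrow> d (- a) = - d a"
  using der_add[of K d a "-a"] sfneg der0 by fastforce
lemma dersum: assumes "isder K d" "subfield K" "finite A" "\<forall>i\<in>A. f i \<in> K" shows "d (sum f A) = (\<Sum>i\<in>A. d (f i))"
  using assms(3,4)
proof (induction A rule: finite_induct)
  case empty then show ?case using der0 assms by simp
next
  case (insert x F)
  then show ?case using assms by (simp add: der_add sfsum)
qed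

lemma Kpoly_add: "subfield K \<Longrightarrow> Kpoly K p \<Longrightarrow> Kpoly K q \<Longrightarrow> Kpoly K (p + q)"
  by (simp add: Kpoly_def sfadd)
lemma Kpoly_neg: "subfield K \<Longrightarrow> Kpoly K p \<Longrightarrow> Kpoly K (- p)"
  by (simp add: Kpoly_def sfneg)
lemma Kpoly_diff: "subfield K \<Longrightarrow> Kpoly K p \<Longrightarrow> Kpoly K q \<Longrightarrow> Kpoly K (p - q)"
  by (simp add: Kpoly_def sfdiff)
lemma Kpoly_mult: "subfield K \<Longrightarrow> Kpoly K p \<Longrightarrow> Kpoly K q \<Longrightarrow> Kpoly K (p * q)"
  by (auto simp: Kpoly_def coeff_mult intro!: sfsum sfmult)
lemma Kpoly_const: "subfield K \<Longrightarrow> a \<in> K \<Longrightarrow> Kpoly K [:a:]"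
  by (auto simp: Kpoly_def coeff_pCons split: nat.split intro: sf0)
lemma Kpoly_X: "subfield K \<Longrightarrow> Kpoly K [:0,1:]"
  by (auto simp: Kpoly_def coeff_pCons split: nat.split intro: sf0 sf1)
lemma Kpoly_monom: "subfield K \<Longrightarrow> a \<in> K \<Longrightarrow> Kpoly K (monom a n)"
  by (auto simp: Kpoly_def coeff_monom intro: sf0)
lemma Kpoly_pderiv: "subfield K \<Longrightarrow> Kpoly K p \<Longrightarrow> Kpoly K (pderiv p)"
  by (auto simp: Kpoly_def coeff_pderiv intro!: sfmult sfnat sfadd sf1)
lemma Kpoly_1: "subfield K \<Longrightarrow> Kpoly K 1"
  using Kpoly_const[of K 1] sf1 by (simp add: one_pCons)
lemma Kpoly_0: "subfield K \<Longrightarrow> Kpoly K 0"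
  by (simp add: Kpoly_def sf0)

lemma mapd_add: "isder K d \<Longrightarrow> subfield K \<Longrightarrow> Kpoly K p \<Longrightarrow> Kpoly K q \<Longrightarrow>
   map_poly d (p + q) = map_poly d p + map_poly d q"
  by (rule poly_eqI) (auto simp: coeff_map_poly der0 der_add Kpoly_def)

lemma mapd_neg: "isder K d \<Longrightarrow> subfield K \<Longrightarrow> Kpoly K p \<Longrightarrow>
   map_poly d (- p) = - map_poly d p"
  by (rule poly_eqI) (auto simp: coeff_map_poly der0 derneg Kpoly_def)

lemma mapd_mult: "isder K d \<Longrightarrow> subfield K \<Longrightarrow> Kpoly K p \<Longrightarrow> Kpoly K q \<Longrightarrow>
   map_poly d (p * q) = map_poly d p * q + p * map_poly d q"
proof (rule poly_eqI)
  fix n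
  assume d: "isder K d" and K: "subfield K" and p: "Kpoly K p" and q: "Kpoly K q"
  have "coeff (map_poly d (p * q)) n = d (\<Sum>i\<le>n. coeff p i * coeff q (n - i))"
    by (simp add: coeff_map_poly der0[OF d K] coeff_mult)
  also have "\<dots> = (\<Sum>i\<le>n. d (coeff p i * coeff q (n - i)))"
    using p q by (intro dersum[OF d K]) (auto simp: Kpoly_def intro: sfmult[OF K])
  also have "\<dots> = (\<Sum>i\<le>n. d (coeff p i) * coeff q (n - i) + coeff p i * d (coeff q (n - i)))"
    using p q by (intro sum.cong refl) (simp add: der_mult[OF d] Kpoly_def)
  also have "\<dots> = coeff (map_poly d p * q + p * map_poly d q) n"
    by (simp add: coeff_mult coeff_map_poly der0[OF d K] sum.distrib)
  finally show "coeff (map_poly d (p * q)) n = coeff (map_poly d p * q + p * map_poly d q) n" .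
qed

lemma Dpx_add: "isder K d \<Longrightarrow> subfield K \<Longrightarrow> Kpoly K p \<Longrightarrow> Kpoly K q \<Longrightarrow>
   Dpx d x e (p + q) = Dpx d x e p + Dpx d x e q"
  by (simp add: Dpx_def mapd_add pderiv_add algebra_simps)
lemma Dpx_neg: "isder K d \<Longrightarrow> subfield K \<Longrightarrow> Kpoly K p \<Longrightarrow>
   Dpx d x e (- p) = - Dpx d x e p"
  by (simp add: Dpx_def mapd_neg pderiv_minus algebra_simps)
lemma Dpx_diff: "isder K d \<Longrightarrow> subfield K \<Longrightarrow> Kpoly K p \<Longrightarrow> Kpoly K q \<Longrightarrow>
   Dpx d x e (p - q) = Dpx d x e p - Dpx d x e q"
  using Dpx_add[of K d p "-q" x e] Dpx_neg[of K d q x e] Kpoly_neg[of K q] by simp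
lemma Dpx_mult: "isder K d \<Longrightarrow> subfield K \<Longrightarrow> Kpoly K p \<Longrightarrow> Kpoly K q \<Longrightarrow>
   Dpx d x e (p * q) = Dpx d x e p * poly q x + poly p x * Dpx d x e q"
  by (simp add: Dpx_def mapd_mult pderiv_mult algebra_simps)
lemma Dpx_0: "isder K d \<Longrightarrow> subfield K \<Longrightarrow> Dpx d x e 0 = 0"
  by (simp add: Dpx_def)
lemma Dpx_const: "isder K d \<Longrightarrow> subfield K \<Longrightarrow> Dpx d x e [:a:] = d a"
  by (simp add: Dpx_def der0 map_poly_pCons)
lemma Dpx_X: "isder K d \<Longrightarrow> subfield K \<Longrightarrow> Dpx d x e [:0,1:] = e"
  by (simp add: Dpx_def der0 der1 pderiv_pCons map_poly_pCons)

definition compat :: "real set \<Rightarrow> (real \<Rightarrow> real) \<Rightarrow> real \<Rightarrow> real \<Rightarrow> bool" where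
  "compat K d x e \<longleftrightarrow> (\<forall>p. Kpoly K p \<longrightarrow> poly p x = 0 \<longrightarrow> Dpx d x e p = 0)"

lemma fa: "Q \<noteq> 0 \<Longrightarrow> S \<noteq> (0::real) \<Longrightarrow> ((Dp*S + P*Ds + (Dr*Q + R*Dq))*(Q*S) - (P*S + R*Q)*(Dq*S + Q*Ds))/(Q*S)^2 = (Dp*Q - P*Dq)/Q^2 + (Dr*S - R*Ds)/S^2"
  by (simp add: field_simps power2_eq_square)
lemma fm: "Q \<noteq> 0 \<Longrightarrow> S \<noteq> (0::real) \<Longrightarrow> ((Dp*R + P*Dr)*(Q*S) - (P*R)*(Dq*S + Q*Ds))/(Q*S)^2 = (P/Q) * ((Dr*S - R*Ds)/S^2) + ((Dp*Q - P*Dq)/Q^2) * (R/S)"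
  by (simp add: field_simps power2_eq_square)

definition VV where "VV d x e p q = (Dpx d x e p * poly q x - poly p x * Dpx d x e q) / (poly q x)^2"

lemma VV_wd:
  assumes K: "subfield K" and d: "isder K d" and c: "compat K d x e"
    and kp: "Kpoly K p" "Kpoly K q" "Kpoly K r" "Kpoly K s"
    and nz: "poly q x \<noteq> 0" "poly s x \<noteq> 0"
    and eq: "poly p x / poly q x = poly r x / poly s x"
  shows "VV d x e p q = VV d x e r s"
proof -
  define P Q R S where "P = poly p x" "Q = poly q x" "R = poly r x" "S = poly s x"
  define Dp Dq Dr Ds where "Dp = Dpx d x e p" "Dq = Dpx d x e q" "Dr = Dpx d x e r" "Ds = Dpx d x e s"
  have Q: "Q \<noteq> 0" and S: "S \<noteq> 0" using nz by (auto simp: P_Q_R_S_def)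
  have e1: "P * S = R * Q" using eq Q S by (simp add: P_Q_R_S_def field_simps)
  have "poly (p * s - r * q) x = 0" using e1 by (simp add: P_Q_R_S_def algebra_simps)
  hence "Dpx d x e (p * s - r * q) = 0"
    using c kp by (simp add: compat_def Kpoly_diff Kpoly_mult K)
  moreover have "Dpx d x e (p * s - r * q) = Dp * S + P * Ds - (Dr * Q + R * Dq)"
    using kp unfolding P_Q_R_S_def Dp_Dq_Dr_Ds_def
    by (simp only: Dpx_diff[OF d K Kpoly_mult[OF K kp(1) kp(4)] Kpoly_mult[OF K kp(3) kp(2)]]
       Dpx_mult[OF d K kp(1) kp(4)] Dpx_mult[OF d K kp(3) kp(2)])
  ultimately have e2: "Dp * S + P * Ds - (Dr * Q + R * Dq) = 0" by simp
  have "(Dp*Q - P*Dq) * S^2 = (Dr*S - R*Ds) * Q^2" using e1 e2 by algebra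
  thus ?thesis using Q S by (simp add: VV_def P_Q_R_S_def Dp_Dq_Dr_Ds_def field_simps)
qed

lemma extension:
  assumes K: "subfield K" and d: "isder K d" and c: "compat K d x e"
  shows "\<exists>K' d'. subfield K' \<and> isder K' d' \<and> K \<subseteq> K' \<and> (\<forall>a\<in>K. d' a = d a) \<and> x \<in> K' \<and> d' x = e"
proof -
  define L where "L = {y. \<exists>p q. Kpoly K p \<and> Kpoly K q \<and> poly q x \<noteq> 0 \<and> y = poly p x / poly q x}"
  define d' where "d' y = (SOME v. \<exists>p q. Kpoly K p \<and> Kpoly K q \<and> poly q x \<noteq> 0 \<and> y = poly p x / poly q x \<and> v = VV d x e p q)" for y
  have inL: "poly p x / poly q x \<in> L" if "Kpoly K p" "Kpoly K q" "poly q x \<noteq> 0" for p q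
    unfolding L_def by (rule CollectI, rule exI[of _ p], rule exI[of _ q]) (simp add: that)
  have dval: "d' (poly p x / poly q x) = VV d x e p q" if kp: "Kpoly K p" "Kpoly K q" and nz: "poly q x \<noteq> 0" for p q
  proof -
    have "\<exists>p' q'. Kpoly K p' \<and> Kpoly K q' \<and> poly q' x \<noteq> 0 \<and> poly p x / poly q x = poly p' x / poly q' x \<and> d' (poly p x / poly q x) = VV d x e p' q'"
      unfolding d'_def
    proof (rule someI_ex)
      show "\<exists>v p' q'. Kpoly K p' \<and> Kpoly K q' \<and> poly q' x \<noteq> 0 \<and> poly p x / poly q x = poly p' x / poly q' x \<and> v = VV d x e p' q'"
        by (rule exI[of _ "VV d x e p q"], rule exI[of _ p], rule exI[of _ q]) (simp add: kp nz)
    qed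
    then obtain p' q' where h: "Kpoly K p'" "Kpoly K q'" "poly q' x \<noteq> 0"
      "poly p x / poly q x = poly p' x / poly q' x" "d' (poly p x / poly q x) = VV d x e p' q'"
      by blast
    show ?thesis using h(5) VV_wd[OF K d c kp h(1,2) nz h(3) h(4)] by simp
  qed
  have L0: "0 \<in> L" using inL[of 0 1] Kpoly_0[OF K] Kpoly_1[OF K] by simp
  have Lsf: "subfield L"
    unfolding subfield_def
  proof (intro conjI ballI)
    show "0 \<in> L" by (rule L0)
    show "1 \<in> L" using inL[of 1 1] Kpoly_1[OF K] by simp
    fix a b assume "a \<in> L" "b \<in> L"
    then obtain p q r s where kp: "Kpoly K p" "Kpoly K q" "Kpoly K r" "Kpoly K s"
      and nz: "poly q x \<noteq> 0" "poly s x \<noteq> 0" and ab: "a = poly p x / poly q x" "b = poly r x / poly s x"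
      unfolding L_def by blast
    have "a + b = poly (p * s + r * q) x / poly (q * s) x" unfolding ab using nz by (simp add: field_simps)
    moreover have "poly (q * s) x \<noteq> 0" using nz by simp
    ultimately show "a + b \<in> L"
      by (auto intro!: inL Kpoly_add Kpoly_mult K kp simp del: poly_mult poly_add)
    have "a * b = poly (p * r) x / poly (q * s) x" unfolding ab using nz by (simp add: field_simps)
    moreover have "poly (q * s) x \<noteq> 0" using nz by simp
    ultimately show "a * b \<in> L"
      by (auto intro!: inL Kpoly_add Kpoly_mult K kp simp del: poly_mult poly_add)
  next
    fix a assume "a \<in> L"
    then obtain p q where kp: "Kpoly K p" "Kpoly K q"
      and nz: "poly q x \<noteq> 0" and ab: "a = poly p x / poly q x"
      unfolding L_def by blast
    have "- a = poly (- p) x / poly q x" using ab by simp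
    thus "- a \<in> L" using kp nz by (auto intro!: inL Kpoly_neg K simp del: poly_minus)
    show "inverse a \<in> L"
    proof (cases "poly p x = 0")
      case True
      then show ?thesis using ab L0 by simp
    next
      case False
      have "inverse a = poly q x / poly p x" using ab by simp
      thus ?thesis using kp False by (auto intro!: inL)
    qed
  qed
  have Lder: "isder L d'"
    unfolding isder_def
  proof (intro ballI conjI)
    fix a b assume "a \<in> L" "b \<in> L"
    then obtain p q r s where kp: "Kpoly K p" "Kpoly K q" "Kpoly K r" "Kpoly K s"
      and nz: "poly q x \<noteq> 0" "poly s x \<noteq> 0" and ab: "a = poly p x / poly q x" "b = poly r x / poly s x"
      unfolding L_def by blast
    have "a + b = poly (p * s + r * q) x / poly (q * s) x" unfolding ab using nz by (simp add: field_simps)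
    hence "d' (a + b) = d' (poly (p * s + r * q) x / poly (q * s) x)" by (simp only:)
    also have "\<dots> = VV d x e (p * s + r * q) (q * s)"
      using kp nz by (intro dval Kpoly_add Kpoly_mult K) auto
    also have "\<dots> = VV d x e p q + VV d x e r s"
      using kp nz unfolding VV_def
      by (simp only: Dpx_add[OF d K Kpoly_mult[OF K kp(1) kp(4)] Kpoly_mult[OF K kp(3) kp(2)]]
       Dpx_mult[OF d K kp(1) kp(4)] Dpx_mult[OF d K kp(3) kp(2)] Dpx_mult[OF d K kp(2) kp(4)]
       poly_add poly_mult) (rule fa[OF nz])
    also have "\<dots> = d' a + d' b" unfolding ab by (simp only: dval[OF kp(1,2) nz(1)] dval[OF kp(3,4) nz(2)])
    finally show "d' (a + b) = d' a + d' b" .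
    have "a * b = poly (p * r) x / poly (q * s) x" unfolding ab using nz by (simp add: field_simps)
    hence "d' (a * b) = d' (poly (p * r) x / poly (q * s) x)" by (simp only:)
    also have "\<dots> = VV d x e (p * r) (q * s)"
      using kp nz by (intro dval Kpoly_add Kpoly_mult K) auto
    also have "\<dots> = (poly p x / poly q x) * VV d x e r s + VV d x e p q * (poly r x / poly s x)"
      unfolding VV_def
      by (simp only: Dpx_mult[OF d K kp(1) kp(3)] Dpx_mult[OF d K kp(2) kp(4)]
       poly_add poly_mult) (rule fm[OF nz])
    also have "\<dots> = a * d' b + d' a * b" unfolding ab by (simp only: dval[OF kp(1,2) nz(1)] dval[OF kp(3,4) nz(2)])
    finally show "d' (a * b) = a * d' b + d' a * b" .
  qed
  have KL: "K \<subseteq> L"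
  proof
    fix a assume "a \<in> K"
    thus "a \<in> L" using inL[of "[:a:]" 1] Kpoly_const[OF K] Kpoly_1[OF K] by simp
  qed
  have dd: "\<forall>a\<in>K. d' a = d a"
  proof
    fix a assume a: "a \<in> K"
    have "d' a = d' (poly [:a:] x / poly 1 x)" by simp
    also have "\<dots> = VV d x e [:a:] 1" using a by (intro dval Kpoly_const Kpoly_1 K) auto
    also have "\<dots> = d a" using Dpx_const[OF d K, of x e a] Dpx_const[OF d K, of x e 1] der1[OF d K]
      by (simp add: VV_def one_pCons)
    finally show "d' a = d a" .
  qed
  have xL: "x \<in> L" using inL[of "[:0,1:]" 1] Kpoly_X[OF K] Kpoly_1[OF K] by simp
  have "d' x = d' (poly [:0,1:] x / poly 1 x)" by simp
  also have "\<dots> = VV d x e [:0,1:] 1" by (intro dval Kpoly_X Kpoly_1 K) auto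
  also have "\<dots> = e" using Dpx_X[OF d K, of x e] Dpx_const[OF d K, of x e 1] der1[OF d K]
      by (simp add: VV_def one_pCons)
  finally show ?thesis using Lsf Lder KL dd xL by blast
qed

lemma alg_compat:
  assumes K: "subfield K" and d: "isder K d" and p0: "Kpoly K p0" "p0 \<noteq> 0" "poly p0 x = 0"
  shows "\<exists>e. compat K d x e"
proof -
  define PP where "PP n \<longleftrightarrow> (\<exists>q. Kpoly K q \<and> q \<noteq> 0 \<and> poly q x = 0 \<and> degree q = n)" for n
  have "\<exists>n. PP n" using p0 unfolding PP_def by blast
  then obtain n where n: "PP n" and nmin: "\<And>k. k < n \<Longrightarrow> \<not> PP k" using exists_least_iff[of PP] by blast
  then obtain m where m: "Kpoly K m" "m \<noteq> 0" "poly m x = 0" "degree m = n" unfolding PP_def by blast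
  have mmin: "degree m \<le> degree q" if "Kpoly K q" "q \<noteq> 0" "poly q x = 0" for q
  proof (rule ccontr)
    assume "\<not> degree m \<le> degree q"
    hence "degree q < n" using m(4) by simp
    moreover have "PP (degree q)" unfolding PP_def using that by blast
    ultimately show False using nmin by blast
  qed
  have dm: "degree m \<noteq> 0"
  proof
    assume dm0: "degree m = 0"
    define c where "c = coeff m 0"
    have mc: "m = [:c:]" unfolding c_def using degree_0_id[OF dm0] by simp
    have "c \<noteq> 0" using m(2) mc by auto
    moreover have "poly m x = c" using mc by simp
    ultimately show False using m(3) by simp
  qed
  have pm: "Kpoly K (pderiv m)" using Kpoly_pderiv[OF K m(1)] .
  have pmnz: "pderiv m \<noteq> 0" using dm by (simp add: pderiv_eq_0_iff)
  have pmdeg: "degree (pderiv m) < degree m" using dm degree_pderiv[of m] by simp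
  have pmx: "poly (pderiv m) x \<noteq> 0" using mmin[OF pm pmnz] pmdeg by linarith
  define e where "e = - poly (map_poly d m) x / poly (pderiv m) x"
  have Dm: "Dpx d x e m = 0" using pmx by (simp add: Dpx_def e_def)
  have lm: "lead_coeff m \<noteq> 0" using m(2) by simp
  have "Dpx d x e p = 0" if "Kpoly K p" "poly p x = 0" for p
    using that
  proof (induction "degree p" arbitrary: p rule: less_induct)
    case less
    show ?case
    proof (cases "p = 0")
      case True then show ?thesis using Dpx_0[OF d K] by simp
    next
      case False
      hence dge: "degree m \<le> degree p" using mmin less.prems by blast
      define k where "k = degree p - degree m"
      define c where "c = lead_coeff p / lead_coeff m"
      define p' where "p' = p - monom c k * m"
      have cK: "c \<in> K" using less.prems(1) m(1) unfolding c_def Kpoly_def by (intro sfdiv K) auto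
      have kmon: "Kpoly K (monom c k)" using Kpoly_monom[OF K cK] .
      have kp': "Kpoly K p'" unfolding p'_def using less.prems(1) kmon m(1) by (intro Kpoly_diff Kpoly_mult K)
      have p'x: "poly p' x = 0" using less.prems(2) m(3) by (simp add: p'_def)
      have "Dpx d x e p' = 0"
      proof (cases "p' = 0")
        case True then show ?thesis using Dpx_0[OF d K] by simp
      next
        case False
        have c0: "coeff p' (degree p) = 0"
          using dge lm by (simp add: p'_def coeff_monom_mult c_def k_def)
        have "degree (monom c k * m) \<le> degree p"
          using degree_mult_le[of "monom c k" m] degree_monom_le[of c k] dge unfolding k_def by linarith
        hence "degree p' \<le> degree p" unfolding p'_def by (intro degree_diff_le) auto
        moreover have "degree p' \<noteq> degree p"
        proof
          assume "degree p' = degree p"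
          hence "lead_coeff p' = 0" using c0 by simp
          thus False using False by simp
        qed
        ultimately have "degree p' < degree p" by simp
        thus ?thesis using less.hyps kp' p'x by blast
      qed
      moreover have "p = p' + monom c k * m" by (simp add: p'_def)
      ultimately have "Dpx d x e p = 0 + Dpx d x e (monom c k * m)"
        using Dpx_add[OF d K kp' Kpoly_mult[OF K kmon m(1)]] by simp
      also have "\<dots> = 0" using Dpx_mult[OF d K kmon m(1)] Dm m(3) by simp
      finally show ?thesis .
    qed
  qed
  thus ?thesis unfolding compat_def by blast
qed

definition valid :: "(real \<times> real) set \<Rightarrow> bool" where
  "valid G \<longleftrightarrow> (\<forall>a b c. (a,b) \<in> G \<longrightarrow> (a,c) \<in> G \<longrightarrow> b = c) \<and> subfield (Domain G) \<and>
     (\<forall>a da b db. (a,da) \<in> G \<longrightarrow> (b,db) \<in> G \<longrightarrow> (a+b, da+db) \<in> G \<and> (a*b, a*db + da*b) \<in> G)"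

lemma valid_fun: "valid G \<Longrightarrow> (a,b) \<in> G \<Longrightarrow> (a,c) \<in> G \<Longrightarrow> b = c"
  unfolding valid_def by blast
lemma valid_sf: "valid G \<Longrightarrow> subfield (Domain G)"
  unfolding valid_def by blast
lemma valid_add: "valid G \<Longrightarrow> (a,da) \<in> G \<Longrightarrow> (b,db) \<in> G \<Longrightarrow> (a+b, da+db) \<in> G"
  unfolding valid_def by blast
lemma valid_mult: "valid G \<Longrightarrow> (a,da) \<in> G \<Longrightarrow> (b,db) \<in> G \<Longrightarrow> (a*b, a*db + da*b) \<in> G"
  unfolding valid_def by blast
lemma validI:
  assumes "\<And>a b c. (a,b) \<in> G \<Longrightarrow> (a,c) \<in> G \<Longrightarrow> b = c" "subfield (Domain G)"
   "\<And>a da b db. (a,da) \<in> G \<Longrightarrow> (b,db) \<in> G \<Longrightarrow> (a+b, da+db) \<in> G"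
   "\<And>a da b db. (a,da) \<in> G \<Longrightarrow> (b,db) \<in> G \<Longrightarrow> (a*b, a*db + da*b) \<in> G"
  shows "valid G"
  unfolding valid_def using assms by blast

lemma graph_valid:
  assumes K: "subfield K" and d: "isder K d"
  shows "valid {(a, d a) | a. a \<in> K}"
proof (rule validI)
  have dom: "Domain {(a, d a) | a. a \<in> K} = K" by auto
  show "subfield (Domain {(a, d a) | a. a \<in> K})" unfolding dom by (rule K)
  show "b = c" if "(a,b) \<in> {(a, d a) | a. a \<in> K}" "(a,c) \<in> {(a, d a) | a. a \<in> K}" for a b c
    using that by simp
  show "(a+b, da+db) \<in> {(a, d a) | a. a \<in> K}" if "(a,da) \<in> {(a, d a) | a. a \<in> K}" "(b,db) \<in> {(a, d a) | a. a \<in> K}" for a b da db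
  proof -
    have h: "a \<in> K" "b \<in> K" "da = d a" "db = d b" using that by auto
    have "a + b \<in> K" using sfadd[OF K h(1,2)] .
    moreover have "d (a + b) = da + db" using der_add[OF d h(1,2)] h(3,4) by simp
    ultimately show ?thesis by auto
  qed
  show "(a*b, a*db+da*b) \<in> {(a, d a) | a. a \<in> K}" if "(a,da) \<in> {(a, d a) | a. a \<in> K}" "(b,db) \<in> {(a, d a) | a. a \<in> K}" for a b da db
  proof -
    have h: "a \<in> K" "b \<in> K" "da = d a" "db = d b" using that by auto
    have "a * b \<in> K" using sfmult[OF K h(1,2)] .
    moreover have "d (a * b) = a*db+da*b" using der_mult[OF d h(1,2)] h(3,4) by simp
    ultimately show ?thesis by auto
  qed
qed

definition gd :: "(real \<times> real) set \<Rightarrow> real \<Rightarrow> real" where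
  "gd G a = (SOME b. (a,b) \<in> G)"

lemma valid_dd: assumes v: "valid G" and ab: "(a,b) \<in> G" shows "gd G a = b"
proof -
  have "(a, gd G a) \<in> G" unfolding gd_def by (rule someI[of "\<lambda>b. (a,b) \<in> G" b]) (rule ab)
  thus ?thesis by (rule valid_fun[OF v _ ab])
qed

lemma valid_isder: assumes v: "valid G" shows "isder (Domain G) (gd G)"
  unfolding isder_def
proof (intro ballI conjI)
  fix a b assume "a \<in> Domain G" "b \<in> Domain G"
  then obtain da db where h: "(a,da) \<in> G" "(b,db) \<in> G" by blast
  have "gd G (a + b) = da + db" by (rule valid_dd[OF v valid_add[OF v h]])
  thus "gd G (a + b) = gd G a + gd G b" by (simp only: valid_dd[OF v h(1)] valid_dd[OF v h(2)])
  have "gd G (a * b) = a * db + da * b" by (rule valid_dd[OF v valid_mult[OF v h]])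
  thus "gd G (a * b) = a * gd G b + gd G a * b" by (simp only: valid_dd[OF v h(1)] valid_dd[OF v h(2)])
qed

lemma chain_two: "chain\<^sub>\<subseteq> C \<Longrightarrow> X \<in> C \<Longrightarrow> Y \<in> C \<Longrightarrow> \<exists>Z\<in>C. X \<subseteq> Z \<and> Y \<subseteq> Z"
proof -
  assume C: "chain\<^sub>\<subseteq> C" and X: "X \<in> C" and Y: "Y \<in> C"
  have "X \<subseteq> Y \<or> Y \<subseteq> X" using C X Y unfolding chain_subset_def by blast
  thus ?thesis
  proof
    assume "X \<subseteq> Y" thus ?thesis using Y by blast
  next
    assume "Y \<subseteq> X" thus ?thesis using X by blast
  qed
qed

lemma chain_valid:
  assumes C: "chain\<^sub>\<subseteq> C" "C \<noteq> {}" "\<forall>X\<in>C. valid X"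
  shows "valid (\<Union>C)"
proof (rule validI)
  fix a b c assume ab: "(a,b) \<in> \<Union>C" and ac: "(a,c) \<in> \<Union>C"
  from ab obtain X where X: "X \<in> C" "(a,b) \<in> X" by (rule UnionE)
  from ac obtain Y where Y: "Y \<in> C" "(a,c) \<in> Y" by (rule UnionE)
  from chain_two[OF C(1) X(1) Y(1)] obtain Z where Z: "Z \<in> C" "X \<subseteq> Z" "Y \<subseteq> Z" by blast
  have "valid Z" using C(3) Z(1) by (rule bspec)
  thus "b = c" using subsetD[OF Z(2) X(2)] subsetD[OF Z(3) Y(2)] by (rule valid_fun)
next
  fix a da b db assume ab: "(a,da) \<in> \<Union>C" and ac: "(b,db) \<in> \<Union>C"
  from ab obtain X where X: "X \<in> C" "(a,da) \<in> X" by (rule UnionE)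
  from ac obtain Y where Y: "Y \<in> C" "(b,db) \<in> Y" by (rule UnionE)
  from chain_two[OF C(1) X(1) Y(1)] obtain Z where Z: "Z \<in> C" "X \<subseteq> Z" "Y \<subseteq> Z" by blast
  have "valid Z" using C(3) Z(1) by (rule bspec)
  hence "(a+b, da+db) \<in> Z" using subsetD[OF Z(2) X(2)] subsetD[OF Z(3) Y(2)] by (rule valid_add)
  thus "(a+b, da+db) \<in> \<Union>C" using Z(1) by (rule UnionI[rotated])
next
  fix a da b db assume ab: "(a,da) \<in> \<Union>C" and ac: "(b,db) \<in> \<Union>C"
  from ab obtain X where X: "X \<in> C" "(a,da) \<in> X" by (rule UnionE)
  from ac obtain Y where Y: "Y \<in> C" "(b,db) \<in> Y" by (rule UnionE)
  from chain_two[OF C(1) X(1) Y(1)] obtain Z where Z: "Z \<in> C" "X \<subseteq> Z" "Y \<subseteq> Z" by blast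
  have "valid Z" using C(3) Z(1) by (rule bspec)
  hence "(a*b, a*db + da*b) \<in> Z" using subsetD[OF Z(2) X(2)] subsetD[OF Z(3) Y(2)] by (rule valid_mult)
  thus "(a*b, a*db + da*b) \<in> \<Union>C" using Z(1) by (rule UnionI[rotated])
next
  have DU: "Domain X \<subseteq> Domain (\<Union>C)" if "X \<in> C" for X using that by blast
  obtain X0 where X0: "X0 \<in> C" using C(2) by blast
  show "subfield (Domain (\<Union>C))"
    unfolding subfield_def
  proof (intro conjI ballI)
    have "subfield (Domain X0)" using valid_sf bspec[OF C(3) X0] by blast
    hence "0 \<in> Domain X0" "1 \<in> Domain X0" using sf0 sf1 by blast+
    thus "0 \<in> Domain (\<Union>C)" "1 \<in> Domain (\<Union>C)" using DU[OF X0] by blast+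
  next
    fix a b assume "a \<in> Domain (\<Union>C)" "b \<in> Domain (\<Union>C)"
    then obtain da db where "(a,da) \<in> \<Union>C" "(b,db) \<in> \<Union>C" by blast
    then obtain X Y where X: "X \<in> C" "(a,da) \<in> X" and Y: "Y \<in> C" "(b,db) \<in> Y" by blast
    from chain_two[OF C(1) X(1) Y(1)] obtain Z where Z: "Z \<in> C" "X \<subseteq> Z" "Y \<subseteq> Z" by blast
    have sZ: "subfield (Domain Z)" using valid_sf bspec[OF C(3) Z(1)] by blast
    have aZ: "a \<in> Domain Z" using subsetD[OF Z(2) X(2)] by blast
    have bZ: "b \<in> Domain Z" using subsetD[OF Z(3) Y(2)] by blast
    show "a + b \<in> Domain (\<Union>C)" using sfadd[OF sZ aZ bZ] DU[OF Z(1)] by blast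
    show "a * b \<in> Domain (\<Union>C)" using sfmult[OF sZ aZ bZ] DU[OF Z(1)] by blast
  next
    fix a assume "a \<in> Domain (\<Union>C)"
    then obtain da where "(a,da) \<in> \<Union>C" by blast
    then obtain Z where Z: "Z \<in> C" "(a,da) \<in> Z" by blast
    have sZ: "subfield (Domain Z)" using valid_sf bspec[OF C(3) Z(1)] by blast
    have aZ: "a \<in> Domain Z" using Z(2) by blast
    show "- a \<in> Domain (\<Union>C)" using sfneg[OF sZ aZ] DU[OF Z(1)] by blast
    show "inverse a \<in> Domain (\<Union>C)" using sfinv[OF sZ aZ] DU[OF Z(1)] by blast
  qed
qed

lemma transc_exists: "\<exists>t::real. \<forall>p. Kpoly \<rat> p \<longrightarrow> poly p t = 0 \<longrightarrow> p = 0"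
proof -
  define P where "P = {p :: real poly. Kpoly \<rat> p \<and> p \<noteq> 0}"
  have sub: "coeffs ` P \<subseteq> lists \<rat>"
  proof
    fix l assume "l \<in> coeffs ` P"
    then obtain p where p: "p \<in> P" "l = coeffs p" by blast
    have "set (coeffs p) \<subseteq> \<rat>"
    proof
      fix c assume "c \<in> set (coeffs p)"
      then obtain i where "c = coeff p i" unfolding coeffs_def by (auto split: if_splits)
      thus "c \<in> \<rat>" using p(1) unfolding P_def Kpoly_def by blast
    qed
    thus "l \<in> lists \<rat>" using p(2) by (simp add: lists_eq_set)
  qed
  have "countable (lists (\<rat> :: real set))" by (rule countable_lists[OF countable_rat])
  hence "countable (coeffs ` P)" using sub by (rule countable_subset[rotated])
  moreover have "inj_on coeffs P" by (rule inj_onI) (simp add: coeffs_eq_iff)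
  ultimately have cP: "countable P" by (rule countable_image_inj_on)
  have fin: "countable {x. poly p x = 0}" if "p \<in> P" for p
  proof -
    have "p \<noteq> 0" using that unfolding P_def by blast
    thus ?thesis by (intro countable_finite poly_roots_finite)
  qed
  have cU: "countable (\<Union>p\<in>P. {x. poly p x = 0})" using cP fin by (rule countable_UN)
  have "(\<Union>p\<in>P. {x. poly p x = 0}) \<noteq> UNIV"
  proof
    assume "(\<Union>p\<in>P. {x. poly p x = 0}) = UNIV"
    hence "countable (UNIV :: real set)" using cU by simp
    thus False using uncountable_UNIV_real by blast
  qed
  then obtain t where t: "t \<notin> (\<Union>p\<in>P. {x. poly p x = 0})" by blast
  have "p = 0" if "Kpoly \<rat> p" "poly p t = 0" for p
  proof (rule ccontr)
    assume "p \<noteq> 0"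
    hence "p \<in> P" using that(1) unfolding P_def by blast
    thus False using t that(2) by blast
  qed
  thus ?thesis by blast
qed

lemma der_exists: "\<exists>D::real \<Rightarrow> real. (\<forall>a b. D (a + b) = D a + D b \<and> D (a * b) = a * D b + D a * b) \<and> (\<exists>t. D t = 1)"
proof -
  obtain t where t: "\<forall>p. Kpoly \<rat> p \<longrightarrow> poly p t = 0 \<longrightarrow> p = 0" using transc_exists by blast
  have Q: "subfield \<rat>" unfolding subfield_def by auto
  have dQ: "isder \<rat> (\<lambda>_. 0)" unfolding isder_def by simp
  have "compat \<rat> (\<lambda>_. 0) t 1" unfolding compat_def using t Dpx_0[OF dQ Q] by blast
  from extension[OF Q dQ this] obtain K1 d1 where K1: "subfield K1" "isder K1 d1" "t \<in> K1" "d1 t = 1" by blast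
  define A where "A = {G. valid G \<and> (t, 1) \<in> G}"
  define G0 where "G0 = {(a, d1 a) | a. a \<in> K1}"
  have G0: "G0 \<in> A" unfolding A_def G0_def using graph_valid[OF K1(1,2)] K1(3,4) by force
  have "\<forall>C\<in>chains A. \<exists>U\<in>A. \<forall>X\<in>C. X \<subseteq> U"
  proof
    fix C assume C: "C \<in> chains A"
    show "\<exists>U\<in>A. \<forall>X\<in>C. X \<subseteq> U"
    proof (cases "C = {}")
      case True then show ?thesis using G0 by blast
    next
      case False
      have "valid (\<Union>C)" using C False by (intro chain_valid) (auto simp: chains_def A_def)
      moreover have "(t,1) \<in> \<Union>C" using C False by (auto simp: chains_def A_def)
      ultimately show ?thesis unfolding A_def by blast
    qed
  qed
  from Zorn_Lemma2[OF this] obtain M where M: "M \<in> A" and Mmax: "\<And>X. X \<in> A \<Longrightarrow> M \<subseteq> X \<Longrightarrow> X = M" by blast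
  define d where "d = gd M"
  have vM: "valid M" and tM: "(t,1) \<in> M" using M by (auto simp: A_def)
  have dd2: "d a = b" if "(a,b) \<in> M" for a b using valid_dd[OF vM that] unfolding d_def .
  have derM: "isder (Domain M) d" using valid_isder[OF vM] unfolding d_def .
  have sfM: "subfield (Domain M)" using valid_sf[OF vM] .
  have dt: "d t = 1" using dd2[OF tM] .
  have full: "x \<in> Domain M" for x
  proof (rule ccontr)
    assume nx: "x \<notin> Domain M"
    have "\<exists>e. compat (Domain M) d x e"
    proof (cases "\<exists>p. Kpoly (Domain M) p \<and> p \<noteq> 0 \<and> poly p x = 0")
      case True
      then show ?thesis using alg_compat[OF sfM derM] by blast
    next
      case False
      hence "compat (Domain M) d x 0" unfolding compat_def using Dpx_0[OF derM sfM] by blast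
      thus ?thesis by blast
    qed
    then obtain e where "compat (Domain M) d x e" by blast
    from extension[OF sfM derM this] obtain K' d' where K': "subfield K'" "isder K' d'"
      "Domain M \<subseteq> K'" "\<forall>a\<in>Domain M. d' a = d a" "x \<in> K'" by blast
    define G' where "G' = {(a, d' a) | a. a \<in> K'}"
    have "valid G'" unfolding G'_def using graph_valid[OF K'(1,2)] .
    moreover have tD: "t \<in> Domain M" using tM by blast
    hence "t \<in> K'" "d' t = 1" using K'(3) K'(4) dt by auto
    hence "(t,1) \<in> G'" unfolding G'_def by force
    ultimately have "G' \<in> A" unfolding A_def by blast
    moreover have "M \<subseteq> G'"
    proof
      fix z assume "z \<in> M"
      then obtain a b where z: "z = (a,b)" "(a,b) \<in> M" by (cases z) auto
      have "a \<in> K'" "d' a = b" using K'(3,4) dd2[OF z(2)] z(2) by auto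
      thus "z \<in> G'" using z unfolding G'_def by force
    qed
    ultimately have "G' = M" using Mmax by blast
    moreover have "x \<in> Domain G'" using K'(5) unfolding G'_def by blast
    ultimately show False using nx by simp
  qed
  have "Domain M = UNIV" using full by blast
  hence "isder UNIV d" using derM by simp
  moreover note dt
  ultimately show ?thesis unfolding isder_def by blast
qed


lemma cont_add_zero:
  fixes g :: "real \<Rightarrow> real"
  assumes c: "continuous_on UNIV g" and add: "\<And>r s. g (r + s) = g r + g s" and g1: "g 1 = 0"
  shows "g x = 0"
proof -
  have g0: "g 0 = 0" using add[of 0 0] by simp
  have gn: "g (of_nat n * r) = of_nat n * g r" for n r
  proof (induction n)
    case 0 then show ?case using g0 by simp
  next
    case (Suc n)
    have "g (of_nat (Suc n) * r) = g (of_nat n * r + r)" by (simp add: distrib_right add.commute)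
    also have "\<dots> = g (of_nat n * r) + g r" by (rule add)
    finally show ?case using Suc by (simp add: distrib_right)
  qed
  have gneg: "g (- r) = - g r" for r using add[of r "-r"] g0 by simp
  have gi: "g (of_int m * r) = of_int m * g r" for m r
  proof (cases m rule: int_cases)
    case (nonneg n)
    then show ?thesis using gn[of n r] by simp
  next
    case (neg n)
    have e: "(of_int m :: real) = - of_nat (Suc n)" using neg by simp
    have "of_int m * r = - (of_nat (Suc n) * r)" unfolding e by (simp add: algebra_simps)
    hence "g (of_int m * r) = g (- (of_nat (Suc n) * r))" by (rule arg_cong)
    also have "\<dots> = - (of_nat (Suc n) * g r)" by (simp only: gneg gn)
    finally show ?thesis unfolding e by (simp add: algebra_simps)
  qed
  have gq: "g q = 0" if qR: "q \<in> \<rat>" for q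
  proof -
    obtain a b where ab: "b > 0" "q = of_int a / of_int b" using Rats_cases'[OF qR] by blast
    have "of_int b * g q = g (of_int b * q)" using gi by simp
    also have "of_int b * q = of_int a * 1" using ab by simp
    also have "g (of_int a * 1) = 0" using gi[of a 1] g1 by simp
    finally show ?thesis using ab(1) by simp
  qed
  have cl: "closed {x. g x = (\<lambda>_. 0) x}" by (rule closed_Collect_eq[OF c continuous_on_const])
  have "\<rat> \<subseteq> {x. g x = (\<lambda>_. 0) x}" using gq by auto
  hence "closure \<rat> \<subseteq> {x. g x = (\<lambda>_. 0) x}" using cl by (rule closure_minimal)
  thus ?thesis using Rats_closure_real by auto
qed
lemma center_fst: assumes "z \<in> n6_center" shows "fst z = 0 \<and> fst (snd z) = 0"
proof -
  obtain a b c where z: "z = (a, b, c)" by (cases z) auto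
  obtain a0 a1 where a: "a = (a0,a1)" by (cases a) auto
  obtain b0 b1 where b: "b = (b0,b1)" by (cases b) auto
  have "n6_mult ((1,0),(0,0),(0,0)) z = n6_mult z ((1,0),(0,0),(0,0))"
       "n6_mult ((0,0),(1,0),(0,0)) z = n6_mult z ((0,0),(1,0),(0,0))"
    using assms unfolding n6_center_def by blast+
  thus ?thesis unfolding z a b by (simp add: n6_mult_def dmul_def prod_eq_iff)
qed

lemma exp_log: "n6_exp (n6_log u) = u"
  by (cases u) (auto simp: n6_exp_def n6_log_def dmul_def)

definition th :: "(real \<Rightarrow> real) \<Rightarrow> dual \<Rightarrow> dual" where
  "th D a = (fst a, snd a + D (fst a))"
definition FF :: "(real \<Rightarrow> real) \<Rightarrow> n6 \<Rightarrow> n6" where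
  "FF D u = (th D (fst u), th D (fst (snd u)), th D (snd (snd u)))"

lemma FF_aut:
  assumes add: "\<And>a b. D (a + b) = D a + D b" and mul: "\<And>a b. D (a * b) = a * D b + D a * b"
  shows "n6_abstract_aut (FF D)"
proof -
  have thadd: "th D (a + b) = th D a + th D b" for a b by (simp add: th_def add)
  have thmul: "th D (dmul a b) = dmul (th D a) (th D b)" for a b
  proof -
    have "D (fst a * fst b) = fst a * D (fst b) + D (fst a) * fst b" by (rule mul)
    thus ?thesis unfolding th_def dmul_def by (simp add: add algebra_simps)
  qed
  have thneg: "th (\<lambda>x. - D x) (th D a) = a" "th D (th (\<lambda>x. - D x) a) = a" for a by (simp_all add: th_def)
  have "FF (\<lambda>x. - D x) \<circ> FF D = id" "FF D \<circ> FF (\<lambda>x. - D x) = id"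
    by (auto simp: FF_def thneg fun_eq_iff)
  hence "bij (FF D)" by (rule o_bij)
  moreover have "FF D (n6_mult x y) = n6_mult (FF D x) (FF D y)" for x y
  proof -
    obtain a b c where x: "x = (a,b,c)" by (cases x) auto
    obtain a' b' c' where y: "y = (a',b',c')" by (cases y) auto
    show ?thesis unfolding x y by (simp add: FF_def n6_mult_def thadd thmul)
  qed
  ultimately show ?thesis unfolding n6_abstract_aut_def by blast
qed



lemma br_comp: "n6_bracket u v = (0, 0, dmul (fst u) (fst (snd v)) - dmul (fst v) (fst (snd u)))"
  by (simp add: n6_bracket_def split: prod.splits)

lemma dmul_add2: "dmul a (b + c) = dmul a b + dmul a c"
  by (simp add: dmul_def algebra_simps)
lemma dmul_add1: "dmul (a + b) c = dmul a c + dmul b c"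
  by (simp add: dmul_def algebra_simps)
lemma dmul_zero2: "dmul a 0 = 0" and dmul_zero1: "dmul 0 a = 0"
  by (simp_all add: dmul_def zero_prod_def)

lemma br_add2: "n6_bracket s (u + v) = n6_bracket s u + n6_bracket s v"
  unfolding br_comp by (simp add: dmul_add2 dmul_add1 algebra_simps)
lemma br_zero2: "n6_bracket s 0 = 0"
  unfolding br_comp by (simp add: dmul_def zero_prod_def)
lemma br_anti: "n6_bracket v u = - n6_bracket u v"
  unfolding br_comp by simp
lemma br_sum_list: "n6_bracket s (sum_list vs) = sum_list (map (n6_bracket s) vs)"
  by (induction vs) (simp_all add: br_zero2 br_add2)

lemma uniq2: "\<exists>!x. P x \<Longrightarrow> P a \<Longrightarrow> P b \<Longrightarrow> a = b" by blast

lemma sum_list_upd: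
  fixes xs :: "'a::ab_group_add list"
  shows "k < length xs \<Longrightarrow> sum_list (xs[k := x]) = sum_list xs + x - xs ! k"
proof (induction xs arbitrary: k)
  case Nil then show ?case by simp
next
  case (Cons a xs)
  then show ?case by (cases k) (simp_all add: algebra_simps)
qed

lemma sum_list_rep0: "sum_list (replicate n (0::'a::monoid_add)) = 0"
  by (induction n) simp_all

lemma sum_single:
  fixes xs :: "'a::ab_group_add list"
  assumes "i < length xs" "\<forall>j<length xs. j \<noteq> i \<longrightarrow> xs ! j = 0"
  shows "sum_list xs = xs ! i"
proof -
  have "xs = (replicate (length xs) 0)[i := xs ! i]"
    using assms by (intro nth_equalityI) (auto simp: nth_list_update)
  hence "sum_list xs = sum_list ((replicate (length xs) (0::'a))[i := xs ! i])" by simp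
  also have "\<dots> = xs ! i" using assms(1) by (simp add: sum_list_upd sum_list_rep0)
  finally show ?thesis .
qed

lemma single_decomp:
  assumes "i < n" "z \<in> Ns ! i" "n = length Ns" "\<forall>j<n. n6_ideal (Ns ! j)"
  shows "length ((replicate n 0)[i := z]) = length Ns \<and> (\<forall>j<length Ns. (replicate n 0)[i := z] ! j \<in> Ns ! j)
         \<and> z = sum_list ((replicate n (0::n6))[i := z])"
proof (intro conjI allI impI)
  show "length ((replicate n 0)[i := z]) = length Ns" using assms by simp
  fix j assume j: "j < length Ns"
  have "0 \<in> Ns ! j" using assms(3,4) j unfolding n6_ideal_def by (auto intro: subspace_0)
  thus "(replicate n 0)[i := z] ! j \<in> Ns ! j" using assms j by (auto simp: nth_list_update)
next
  show "z = sum_list ((replicate n (0::n6))[i := z])" using assms(1) by (simp add: sum_list_upd sum_list_rep0)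
qed

locale decomp =
  fixes Ns :: "n6 set list"
  assumes ideals: "\<forall>j<length Ns. n6_ideal (Ns ! j)"
    and uniq: "\<forall>v. \<exists>!vs. length vs = length Ns \<and> (\<forall>j<length Ns. vs ! j \<in> Ns ! j) \<and> v = sum_list vs"
begin

lemma sub: "j < length Ns \<Longrightarrow> subspace (Ns ! j)" using ideals unfolding n6_ideal_def by blast
lemma idl: "j < length Ns \<Longrightarrow> x \<in> Ns ! j \<Longrightarrow> n6_bracket x y \<in> Ns ! j" using ideals unfolding n6_ideal_def by blast
lemma idr: "j < length Ns \<Longrightarrow> x \<in> Ns ! j \<Longrightarrow> n6_bracket y x \<in> Ns ! j"
  using idl[of j x y] br_anti[of y x] sub[of j] by (metis subspace_neg)

lemma dex: obtains vs where "length vs = length Ns" "\<forall>j<length Ns. vs ! j \<in> Ns ! j" "v = sum_list vs"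
  using uniq by blast

lemma disj:
  assumes "j < length Ns" "k < length Ns" "j \<noteq> k" "z \<in> Ns ! j" "z \<in> Ns ! k"
  shows "z = 0"
proof -
  let ?n = "length Ns"
  have a: "length ((replicate ?n 0)[j := z]) = length Ns \<and> (\<forall>m<length Ns. (replicate ?n 0)[j := z] ! m \<in> Ns ! m)
         \<and> z = sum_list ((replicate ?n (0::n6))[j := z])"
    using single_decomp[of j ?n z Ns] assms ideals by blast
  have b: "length ((replicate ?n 0)[k := z]) = length Ns \<and> (\<forall>m<length Ns. (replicate ?n 0)[k := z] ! m \<in> Ns ! m)
         \<and> z = sum_list ((replicate ?n (0::n6))[k := z])"
    using single_decomp[of k ?n z Ns] assms ideals by blast
  have "(replicate ?n 0)[j := z] = (replicate ?n (0::n6))[k := z]"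
    using uniq2[OF uniq[rule_format, of z] a b] .
  hence "(replicate ?n 0)[j := z] ! j = (replicate ?n (0::n6))[k := z] ! j" by simp
  thus ?thesis using assms by (simp add: nth_list_update)
qed

lemma brS:
  assumes i: "i < length Ns" and s: "s \<in> Ns ! i" and vs: "length vs = length Ns" "\<forall>j<length Ns. vs ! j \<in> Ns ! j"
  shows "n6_bracket s (sum_list vs) = n6_bracket s (vs ! i)"
proof -
  have "n6_bracket s (sum_list vs) = sum_list (map (n6_bracket s) vs)" by (rule br_sum_list)
  also have "\<dots> = map (n6_bracket s) vs ! i"
  proof (rule sum_single)
    show "i < length (map (n6_bracket s) vs)" using i vs by simp
    show "\<forall>j<length (map (n6_bracket s) vs). j \<noteq> i \<longrightarrow> map (n6_bracket s) vs ! j = 0"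
    proof (intro allI impI)
      fix j assume j: "j < length (map (n6_bracket s) vs)" "j \<noteq> i"
      have "n6_bracket s (vs ! j) \<in> Ns ! i" using idl[OF i s] .
      moreover have "n6_bracket s (vs ! j) \<in> Ns ! j" using idr[of j "vs ! j" s] vs j by simp
      ultimately show "map (n6_bracket s) vs ! j = 0" using disj[of i j] i j vs by simp
    qed
  qed
  also have "\<dots> = n6_bracket s (vs ! i)" using i vs by simp
  finally show ?thesis .
qed

lemma piece_zero:
  assumes i: "i < length Ns" and lJ: "linear J" and JS: "J ` (Ns ! i) \<subseteq> Ns ! i"
    and JJ: "\<forall>x\<in>Ns ! i. J (J x) = - x"
    and JB: "\<forall>x\<in>Ns ! i. \<forall>y\<in>Ns ! i. n6_bracket (J x) y = J (n6_bracket x y)"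
    and x: "x \<in> Ns ! i"
  shows "x = 0"
proof -
  define S where "S = Ns ! i"
  have xS: "x \<in> S" using x S_def by simp
  have notA: "\<not> (\<exists>x\<in>S. fst (fst x) \<noteq> 0 \<or> fst (fst (snd x)) \<noteq> 0)"
  proof
    assume "\<exists>x\<in>S. fst (fst x) \<noteq> 0 \<or> fst (fst (snd x)) \<noteq> 0"
    then obtain x where xS: "x \<in> S" and nz: "fst (fst x) \<noteq> 0 \<or> fst (fst (snd x)) \<noteq> 0" by blast
    have A1: "((0,0),(0,0),c) \<in> S" for c
    proof (cases "fst (fst x) \<noteq> 0")
      case True
      define a0 a1 where "a0 = fst (fst x)" "a1 = snd (fst x)"
      define y :: n6 where "y = ((0,0),(fst c / a0, (snd c - a1 * fst c / a0) / a0),(0,0))"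
      have "n6_bracket x y = ((0,0),(0,0),c)"
        using True unfolding br_comp y_def a0_a1_def by (simp add: dmul_def prod_eq_iff field_simps)
      moreover have "n6_bracket x y \<in> S" using idl[OF i] xS S_def by simp
      ultimately show ?thesis by simp
    next
      case False
      hence b0: "fst (fst (snd x)) \<noteq> 0" using nz by simp
      define b0 b1 where "b0 = fst (fst (snd x))" "b1 = snd (fst (snd x))"
      define y :: n6 where "y = ((- fst c / b0, (- snd c + b1 * fst c / b0) / b0),(0,0),(0,0))"
      have "n6_bracket x y = ((0,0),(0,0),c)"
        using b0 unfolding br_comp y_def b0_b1_def by (simp add: dmul_def prod_eq_iff field_simps)
      moreover have "n6_bracket x y \<in> S" using idl[OF i] xS S_def by simp
      ultimately show ?thesis by simp
    qed
    have A2: "v \<in> S" for v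
    proof -
      obtain vs where vs: "length vs = length Ns" "\<forall>j<length Ns. vs ! j \<in> Ns ! j" "v = sum_list vs"
        using dex by blast
      have "vs ! j = 0" if j: "j < length vs" "j \<noteq> i" for j
      proof -
        define w where "w = vs ! j"
        have wj: "w \<in> Ns ! j" using vs j w_def by simp
        have bw: "n6_bracket w y = 0" for y
        proof -
          have "n6_bracket w y \<in> Ns ! j" using idl wj j vs by simp
          moreover have "n6_bracket w y = ((0,0),(0,0), snd (snd (n6_bracket w y)))"
            unfolding br_comp by (simp add: zero_prod_def)
          hence "n6_bracket w y \<in> S" using A1 by metis
          ultimately show ?thesis using disj[of i j] i j vs S_def by simp
        qed
        have "n6_bracket w ((0,0),(1,0),(0,0)) = ((0,0),(0,0), fst w)"
          unfolding br_comp by (simp add: dmul_def prod_eq_iff zero_prod_def)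
        hence f1: "fst w = 0" using bw by (simp add: prod_eq_iff zero_prod_def)
        have "n6_bracket w ((1,0),(0,0),(0,0)) = ((0,0),(0,0), - fst (snd w))"
          unfolding br_comp by (simp add: dmul_def prod_eq_iff zero_prod_def)
        hence f2: "fst (snd w) = 0" using bw by (simp add: prod_eq_iff zero_prod_def)
        have "w = ((0,0),(0,0), snd (snd w))" using f1 f2 by (simp add: prod_eq_iff zero_prod_def)
        hence "w \<in> S" using A1 by metis
        thus "vs ! j = 0" using disj[of i j] wj i j vs S_def w_def by simp
      qed
      hence "sum_list vs = vs ! i" using i vs(1) by (intro sum_single) auto
      thus "v \<in> S" using vs i S_def by simp
    qed
    define X1 :: n6 where "X1 = ((1,0),(0,0),(0,0))"
    define X3 :: n6 where "X3 = ((0,0),(0,1),(0,0))"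
    define Z2 :: n6 where "Z2 = ((0,0),(0,0),(0,1))"
    have Z2: "n6_bracket X1 X3 = Z2" unfolding X1_def X3_def Z2_def br_comp by (simp add: dmul_def zero_prod_def)
    have JX1: "J X1 \<in> S" using JS A2[of X1] S_def by blast
    have "n6_bracket (J X1) X3 = J Z2" using JB A2[of X1] A2[of X3] Z2 S_def by simp
    moreover have "n6_bracket (J X1) X3 = fst (fst (J X1)) *\<^sub>R Z2"
      unfolding br_comp X3_def Z2_def by (simp add: dmul_def prod_eq_iff zero_prod_def)
    ultimately have JZ: "J Z2 = fst (fst (J X1)) *\<^sub>R Z2" by simp
    define mu where "mu = fst (fst (J X1))"
    have "J (J Z2) = - Z2" using JJ A2[of Z2] S_def by simp
    moreover have "J (J Z2) = (mu * mu) *\<^sub>R Z2" unfolding JZ mu_def[symmetric]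
      using linear_scale[OF lJ, of mu Z2] JZ mu_def by simp
    ultimately have "(mu * mu) *\<^sub>R Z2 = - Z2" by simp
    hence "mu * mu = -1" unfolding Z2_def by (simp add: prod_eq_iff)
    moreover have "mu * mu \<ge> 0" by simp
    ultimately show False by simp
  qed
  hence B0: "fst (fst y) = 0 \<and> fst (fst (snd y)) = 0" if "y \<in> S" for y using that by blast
  have B1: "fst y = 0 \<and> fst (snd y) = 0" if yS: "y \<in> S" for y
  proof -
    have brSS: "n6_bracket y z = 0" if "z \<in> S" for z
      using B0[OF yS] B0[OF that] unfolding br_comp by (simp add: dmul_def prod_eq_iff zero_prod_def)
    obtain vs where vs: "length vs = length Ns" "\<forall>j<length Ns. vs ! j \<in> Ns ! j" "((0,0),(1,0),(0,0)) = sum_list vs"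
      using dex by blast
    have "n6_bracket y ((0,0),(1,0),(0,0)) = n6_bracket y (vs ! i)"
      using brS[OF i _ vs(1,2)] yS S_def vs(3) by simp
    also have "\<dots> = 0" using brSS vs i S_def by simp
    finally have "fst y = 0" unfolding br_comp by (simp add: dmul_def prod_eq_iff zero_prod_def)
    obtain ws where ws: "length ws = length Ns" "\<forall>j<length Ns. ws ! j \<in> Ns ! j" "((1,0),(0,0),(0,0)) = sum_list ws"
      using dex by blast
    have "n6_bracket y ((1,0),(0,0),(0,0)) = n6_bracket y (ws ! i)"
      using brS[OF i _ ws(1,2)] yS S_def ws(3) by simp
    also have "\<dots> = 0" using brSS ws i S_def by simp
    finally have "fst (snd y) = 0" unfolding br_comp by (simp add: dmul_def prod_eq_iff zero_prod_def)
    with \<open>fst y = 0\<close> show ?thesis by simp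
  qed
  show "x = 0"
  proof (rule ccontr)
    assume xnz: "x \<noteq> 0"
    define c where "c = snd (snd x)"
    have xc: "x = ((0,0),(0,0),c)" using B1[OF xS] c_def by (simp add: prod_eq_iff zero_prod_def)
    define Yc :: n6 where "Yc = ((0,0),c,(0,0))"
    define X1 :: n6 where "X1 = ((1,0),(0,0),(0,0))"
    have bx: "n6_bracket X1 Yc = x" unfolding xc X1_def Yc_def br_comp by (simp add: dmul_def prod_eq_iff zero_prod_def)
    obtain ws where ws: "length ws = length Ns" "\<forall>j<length Ns. ws ! j \<in> Ns ! j" "Yc = sum_list ws"
      using dex by blast
    define l where "l = map (n6_bracket X1) ws"
    have l1: "length l = length Ns" using ws l_def by simp
    have l2: "\<forall>j<length Ns. l ! j \<in> Ns ! j"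
      using ws l_def idr by simp
    have l3: "x = sum_list l" using bx ws(3) br_sum_list l_def by simp
    have li: "l ! i = 0"
    proof -
      have "ws ! i \<in> S" using ws i S_def by simp
      hence "fst (ws ! i) = 0 \<and> fst (snd (ws ! i)) = 0" using B1 by blast
      hence "n6_bracket X1 (ws ! i) = 0" unfolding X1_def br_comp by (simp add: dmul_def prod_eq_iff zero_prod_def)
      thus ?thesis using l_def i ws by simp
    qed
    have sd: "length ((replicate (length Ns) 0)[i := x]) = length Ns \<and> (\<forall>m<length Ns. (replicate (length Ns) 0)[i := x] ! m \<in> Ns ! m)
         \<and> x = sum_list ((replicate (length Ns) (0::n6))[i := x])"
      using single_decomp[of i "length Ns" x Ns] i xS S_def ideals by blast
    have "l = (replicate (length Ns) 0)[i := x]"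
      using uniq2[OF uniq[rule_format, of x], of l] l1 l2 l3 sd by blast
    hence "l ! i = x" using i by simp
    thus False using li xnz by simp
  qed
qed

end


lemma (in decomp) fixes_piece:
  assumes j: "j < length Ns" and cc: "complex_coord_map (Ns ! j) \<sigma>" and w: "w \<in> Ns ! j"
  shows "\<sigma> w = w"
proof -
  obtain J es \<phi> c where lJ: "linear J" and JS: "J ` (Ns ! j) \<subseteq> Ns ! j"
    and JJ: "\<forall>x\<in>Ns ! j. J (J x) = - x"
    and JB: "\<forall>x\<in>Ns ! j. \<forall>y\<in>Ns ! j. n6_bracket (J x) y = J (n6_bracket x y)"
    and fa: "field_aut_C \<phi>"
    and sig: "\<forall>zs. length zs = length es \<longrightarrow>
          \<sigma> (\<Sum>j<length es. cmult J (zs ! j) (es ! j)) =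
            (\<Sum>j<length es. cmult J (\<phi> (zs ! j)) (es ! j))"
    using cc unfolding complex_coord_map_def by blast
  have w0: "w = 0" by (rule piece_zero[OF j lJ JS JJ JB w])
  have phi0: "\<phi> 0 = 0" using fa unfolding field_aut_C_def by (metis add_cancel_right_right add_0)
  have cm0: "cmult J 0 e = 0" for e by (simp add: cmult_def)
  have e1: "\<sigma> (\<Sum>k<length es. cmult J (replicate (length es) 0 ! k) (es ! k)) =
            (\<Sum>k<length es. cmult J (\<phi> (replicate (length es) 0 ! k)) (es ! k))"
    by (rule sig[rule_format]) simp
  have e2: "(\<Sum>k<length es. cmult J (replicate (length es) 0 ! k) (es ! k)) = 0"
    by (intro sum.neutral ballI) (simp add: cm0)
  have e3: "(\<Sum>k<length es. cmult J (\<phi> (replicate (length es) 0 ! k)) (es ! k)) = 0"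
    by (intro sum.neutral ballI) (simp add: cm0 phi0)
  have "\<sigma> 0 = 0" using e1 e2 e3 by simp
  thus ?thesis using w0 by simp
qed

lemma sigma_id:
  assumes "n6_field_sigma \<sigma>"
  shows "\<sigma> v = v"
proof -
  obtain Ns where ideals: "\<forall>i<length Ns. n6_ideal (Ns ! i)"
    and uniq: "\<forall>v. \<exists>!vs. length vs = length Ns \<and> (\<forall>i<length Ns. vs ! i \<in> Ns ! i) \<and> v = sum_list vs"
    and addi: "\<forall>vs. length vs = length Ns \<and> (\<forall>i<length Ns. vs ! i \<in> Ns ! i) \<longrightarrow>
             \<sigma> (sum_list vs) = sum_list (map \<sigma> vs)"
    and pcs: "\<forall>i<length Ns. (\<forall>v\<in>Ns ! i. \<sigma> v = v) \<or> complex_coord_map (Ns ! i) \<sigma>"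
    using assms unfolding n6_field_sigma_def by blast
  interpret decomp Ns using ideals uniq by unfold_locales
  have fx: "\<sigma> w = w" if "j < length Ns" "w \<in> Ns ! j" for j w
    using pcs that fixes_piece by blast
  obtain vs where vs: "length vs = length Ns" "\<forall>j<length Ns. vs ! j \<in> Ns ! j" "v = sum_list vs"
    using dex by blast
  have "map \<sigma> vs = vs" using vs fx by (intro nth_equalityI) auto
  thus ?thesis using addi vs by simp
qed

lemma central_fst:
  assumes "n6_central_aut \<mu>" shows "fst (\<mu> y) = fst y"
proof -
  have "n6_mult (n6_inv y) (\<mu> y) \<in> n6_center" using assms unfolding n6_central_aut_def by blast
  hence "fst (n6_mult (n6_inv y) (\<mu> y)) = 0" using center_fst by blast
  moreover have "fst (n6_mult (n6_inv y) (\<mu> y)) = fst (\<mu> y) - fst y"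
    by (simp add: n6_mult_def n6_inv_def split: prod.splits)
  ultimately show ?thesis by simp
qed

theorem proposition4p2:
  shows "\<not> n6_partial_automatic_continuity"
proof
  assume pac: n6_partial_automatic_continuity
  obtain D :: "real \<Rightarrow> real" where D: "\<forall>a b. D (a + b) = D a + D b \<and> D (a * b) = a * D b + D a * b" and "\<exists>t. D t = 1"
    using der_exists by blast
  then obtain t where Dt: "D t = 1" by blast
  have Dadd: "\<And>a b. D (a + b) = D a + D b" and Dmul: "\<And>a b. D (a * b) = a * D b + D a * b" using D by blast+
  have D1: "D 1 = 0" using Dmul[of 1 1] by simp
  have "n6_abstract_aut (FF D)" by (rule FF_aut[OF Dadd Dmul])
  then obtain \<mu> Fb \<Phi> where mu: "n6_central_aut \<mu>" and Fb: "n6_lie_aut Fb" and Phi: "n6_field_aut \<Phi>"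
    and eq: "FF D = \<mu> \<circ> Fb \<circ> \<Phi>"
    using pac unfolding n6_partial_automatic_continuity_def by blast
  obtain \<sigma> where sig: "n6_field_sigma \<sigma>" and Phid: "\<Phi> = n6_exp \<circ> \<sigma> \<circ> n6_log"
    using Phi unfolding n6_field_aut_def by blast
  have Phi_id: "\<Phi> u = u" for u using Phid sigma_id[OF sig] exp_log by simp
  have Fbhom: "Fb (n6_mult x y) = n6_mult (Fb x) (Fb y)" for x y
    using Fb unfolding n6_lie_aut_def n6_abstract_aut_def by blast
  have Fbc: "continuous_on UNIV Fb" using Fb unfolding n6_lie_aut_def by blast
  define xr :: "real \<Rightarrow> n6" where "xr r = ((r,0),(0,0),(0,0))" for r
  define g where "g r = snd (fst (Fb (xr r)))" for r
  have gD: "g r = D r" for r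
  proof -
    have "FF D (xr r) = \<mu> (Fb (xr r))" using fun_cong[OF eq, of "xr r"] Phi_id by simp
    hence "fst (FF D (xr r)) = fst (Fb (xr r))" using central_fst[OF mu] by simp
    moreover have "fst (FF D (xr r)) = (r, D r)" by (simp add: FF_def th_def xr_def)
    ultimately show ?thesis unfolding g_def by (metis snd_conv)
  qed
  have gadd: "g (r + s) = g r + g s" for r s
  proof -
    have "xr (r + s) = n6_mult (xr r) (xr s)" by (simp add: xr_def n6_mult_def dmul_def)
    hence "Fb (xr (r + s)) = n6_mult (Fb (xr r)) (Fb (xr s))" using Fbhom by simp
    hence "fst (Fb (xr (r + s))) = fst (Fb (xr r)) + fst (Fb (xr s))"
      by (simp add: n6_mult_def split: prod.splits)
    thus ?thesis unfolding g_def by simp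
  qed
  have xrc: "continuous_on UNIV xr" unfolding xr_def by (intro continuous_intros)
  have "continuous_on UNIV (Fb \<circ> xr)"
    by (rule continuous_on_compose[OF xrc continuous_on_subset[OF Fbc]]) simp
  hence gc: "continuous_on UNIV g" unfolding g_def o_def by (intro continuous_intros)
  have "g 1 = 0" using gD D1 by simp
  hence "g t = 0" using cont_add_zero[OF gc gadd] by blast
  thus False using gD Dt by simp
qed

end
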